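(* Let $A, M, F \in \mathbb{C}^{n\times n}$ with $M$ and $F$ nonsingular, and let $I$ be the $n\times n$ identity matrix. Suppose $A$ is an $\mathsf H$-matrix and \[ \langle M\rangle - |M - A| = \langle A\rangle, \qquad \langle F\rangle - |F - A| = \langle A\rangle. \] Then \[ \rho\left(\left| I - F^{-1}(M + F - A) M^{-1} A \right|\right) < 1. \]
   Context: For a matrix $\mathcal A$, $|\mathcal A|$ denotes the entrywise absolute value (modulus) and $\rho(\mathcal A)$ its spectral radius. Comparisons between matrices are entrywise. A square real matrix $\mathcal A$ is an $\mathsf M$-matrix if there exists $\alpha\in\mathbb R$ with $\alpha I - \mathcal A \ge 0$ (entrywise) and $\alpha > \rho(\alpha I - \mathcal A)$. The comparison matrix $\langle \mathcal A\rangle$ of a square matrix $\mathcal A$ is defined by $\langle \mathcal A\rangle_{i,i} := |\mathcal A_{i,i}|$ and $\langle \mathcal A\rangle_{i,j} := -|\mathcal A_{i,j}|$ for $i\ne j$. A square matrix $\mathcal A$ is an $\mathsf H$-matrix if its comparison matrix $\langle\mathcal A\rangle$ is an $\mathsf M$-matrix. *)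

theory Defs
  imports "Jordan_Normal_Form.Spectral_Radius" "Jordan_Normal_Form.Gauss_Jordan_Elimination"
begin

definition cabs_mat :: "complex mat \<Rightarrow> real mat" where
  "cabs_mat A = map_mat cmod A"

definition comparison_mat :: "complex mat \<Rightarrow> real mat" where
  "comparison_mat A = mat (dim_row A) (dim_col A)
     (\<lambda>(i,j). if i = j then cmod (A $$ (i,j)) else - cmod (A $$ (i,j)))"

definition rho_real :: "real mat \<Rightarrow> real" where
  "rho_real B = spectral_radius (map_mat complex_of_real B)"

definition nonneg_mat :: "real mat \<Rightarrow> bool" where
  "nonneg_mat B \<longleftrightarrow> (\<forall>i < dim_row B. \<forall>j < dim_col B. 0 \<le> B $$ (i,j))"

definition M_matrix :: "real mat \<Rightarrow> bool" where
  "M_matrix B \<longleftrightarrow> square_mat B \<and>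
     (\<exists>\<alpha>::real. nonneg_mat (\<alpha> \<cdot>\<^sub>m 1\<^sub>m (dim_row B) - B) \<and>
                 \<alpha> > rho_real (\<alpha> \<cdot>\<^sub>m 1\<^sub>m (dim_row B) - B))"

definition H_matrix :: "complex mat \<Rightarrow> bool" where
  "H_matrix A \<longleftrightarrow> M_matrix (comparison_mat A)"

end

theory Submission
  imports Defs
begin

lemma inv_some:
  assumes "M \<in> carrier_mat n n" "invertible_mat (M::complex mat)"
  shows "the (mat_inverse M) \<in> carrier_mat n n \<and> M * the (mat_inverse M) = 1\<^sub>m n \<and> the (mat_inverse M) * M = 1\<^sub>m n"
proof -
  from assms obtain B where B0: "M * B = 1\<^sub>m n" "B * M = 1\<^sub>m (dim_row B)"
    unfolding invertible_mat_def inverts_mat_def by auto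
  have Bc: "B \<in> carrier_mat n n" using B0 assms(1)
    by (metis carrier_matD(1) carrier_matD(2) carrier_matI index_mult_mat(2) index_mult_mat(3) index_one_mat(2) index_one_mat(3))
  have B: "M * B = 1\<^sub>m n" "B * M = 1\<^sub>m n" using B0 Bc by auto
  have "M \<in> Units (ring_mat TYPE(complex) n ())"
    using B Bc assms(1) unfolding Units_def ring_mat_def by auto
  then obtain C where "mat_inverse M = Some C" using mat_inverse(1)[OF assms(1)] by fastforce
  from mat_inverse(2)[OF assms(1) this] show ?thesis using \<open>mat_inverse M = Some C\<close> by auto
qed

lemma step_vec:
  fixes M A X :: "complex mat"
  assumes M: "M \<in> carrier_mat n n" and A: "A \<in> carrier_mat n n" and X: "X \<in> carrier_mat n n"
    and MX: "M * X = 1\<^sub>m n" and x: "x \<in> carrier_vec n"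
  shows "M *\<^sub>v (x - X *\<^sub>v (A *\<^sub>v x)) = (M - A) *\<^sub>v x"
proof -
  have "M *\<^sub>v (X *\<^sub>v (A *\<^sub>v x)) = (M * X) *\<^sub>v (A *\<^sub>v x)"
    using M X A x by (subst assoc_mult_mat_vec) auto
  hence "M *\<^sub>v (X *\<^sub>v (A *\<^sub>v x)) = A *\<^sub>v x" using MX A x by simp
  then show ?thesis using M A X x by (simp add: mult_minus_distrib_mat_vec minus_mult_distrib_mat_vec)
qed

lemma vec_alg:
  fixes a b c d :: "'a::ab_group_add vec"
  assumes "a \<in> carrier_vec n" "b \<in> carrier_vec n" "c \<in> carrier_vec n" "d \<in> carrier_vec n"
  shows "a - (b + c - d) = (a - b) - (c - d)"
  by (rule eq_vecI, insert assms, auto)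

lemma step_vec2:
  fixes M A F X Y :: "complex mat"
  assumes M: "M \<in> carrier_mat n n" and A: "A \<in> carrier_mat n n" and X: "X \<in> carrier_mat n n"
    and F: "F \<in> carrier_mat n n" and Y: "Y \<in> carrier_mat n n"
    and MX: "M * X = 1\<^sub>m n" and FY: "F * Y = 1\<^sub>m n" and x: "x \<in> carrier_vec n"
  shows "F *\<^sub>v ((1\<^sub>m n - Y * (M + F - A) * X * A) *\<^sub>v x) = (F - A) *\<^sub>v (x - X *\<^sub>v (A *\<^sub>v x))"
proof -
  define w where "w = X *\<^sub>v (A *\<^sub>v x)"
  let ?S = "M + F - A"
  have S: "?S \<in> carrier_mat n n" using M F A by auto
  have Ax: "A *\<^sub>v x \<in> carrier_vec n" using A x by simp
  have w: "w \<in> carrier_vec n" using w_def X A x by simp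
  have Sw: "?S *\<^sub>v w \<in> carrier_vec n" using S w by simp
  have "M *\<^sub>v w = (M * X) *\<^sub>v (A *\<^sub>v x)"
    unfolding w_def by (rule assoc_mult_mat_vec[OF M X Ax, symmetric])
  hence Mw: "M *\<^sub>v w = A *\<^sub>v x" using MX Ax by simp
  have YS: "Y * ?S \<in> carrier_mat n n" using Y S by simp
  have YSX: "Y * ?S * X \<in> carrier_mat n n" using YS X by simp
  have "(1\<^sub>m n - Y * ?S * X * A) *\<^sub>v x = 1\<^sub>m n *\<^sub>v x - (Y * ?S * X * A) *\<^sub>v x"
    by (rule minus_mult_distrib_mat_vec[OF one_carrier_mat mult_carrier_mat[OF YSX A] x])
  also have "(Y * ?S * X * A) *\<^sub>v x = (Y * ?S * X) *\<^sub>v (A *\<^sub>v x)"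
    by (rule assoc_mult_mat_vec[OF YSX A x])
  also have "\<dots> = (Y * ?S) *\<^sub>v w"
    unfolding w_def by (rule assoc_mult_mat_vec[OF YS X Ax])
  also have "\<dots> = Y *\<^sub>v (?S *\<^sub>v w)"
    by (rule assoc_mult_mat_vec[OF Y S w])
  finally have e1: "(1\<^sub>m n - Y * ?S * X * A) *\<^sub>v x = x - Y *\<^sub>v (?S *\<^sub>v w)" using x by simp
  have "F *\<^sub>v (x - Y *\<^sub>v (?S *\<^sub>v w)) = F *\<^sub>v x - F *\<^sub>v (Y *\<^sub>v (?S *\<^sub>v w))"
    by (rule mult_minus_distrib_mat_vec[OF F x mult_mat_vec_carrier[OF Y Sw]])
  also have "F *\<^sub>v (Y *\<^sub>v (?S *\<^sub>v w)) = (F * Y) *\<^sub>v (?S *\<^sub>v w)"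
    by (rule assoc_mult_mat_vec[OF F Y Sw, symmetric])
  also have "\<dots> = ?S *\<^sub>v w" using FY Sw by simp
  finally have e2a: "F *\<^sub>v (x - Y *\<^sub>v (?S *\<^sub>v w)) = F *\<^sub>v x - ?S *\<^sub>v w" .
  have "?S *\<^sub>v w = (M + F) *\<^sub>v w - A *\<^sub>v w"
    by (rule minus_mult_distrib_mat_vec[OF add_carrier_mat[OF F] A w])
  also have "(M + F) *\<^sub>v w = M *\<^sub>v w + F *\<^sub>v w"
    by (rule add_mult_distrib_mat_vec[OF M F w])
  finally have e2b: "?S *\<^sub>v w = M *\<^sub>v w + F *\<^sub>v w - A *\<^sub>v w" .
  have e2: "F *\<^sub>v (x - Y *\<^sub>v (?S *\<^sub>v w)) = F *\<^sub>v x - (M *\<^sub>v w + F *\<^sub>v w - A *\<^sub>v w)"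
    using e2a e2b by simp
  have "(F - A) *\<^sub>v (x - w) = (F - A) *\<^sub>v x - (F - A) *\<^sub>v w"
    by (rule mult_minus_distrib_mat_vec[OF minus_carrier_mat[OF A] x w])
  moreover have "(F - A) *\<^sub>v x = F *\<^sub>v x - A *\<^sub>v x"
    by (rule minus_mult_distrib_mat_vec[OF F A x])
  moreover have "(F - A) *\<^sub>v w = F *\<^sub>v w - A *\<^sub>v w"
    by (rule minus_mult_distrib_mat_vec[OF F A w])
  ultimately have "F *\<^sub>v (x - Y *\<^sub>v (?S *\<^sub>v w)) = (F - A) *\<^sub>v (x - w)"
    using e2 unfolding Mw
  proof -
    assume a: "F *\<^sub>v (x - Y *\<^sub>v (?S *\<^sub>v w)) = F *\<^sub>v x - (A *\<^sub>v x + F *\<^sub>v w - A *\<^sub>v w)"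
      "(F - A) *\<^sub>v (x - w) = (F - A) *\<^sub>v x - (F - A) *\<^sub>v w"
      "(F - A) *\<^sub>v x = F *\<^sub>v x - A *\<^sub>v x" "(F - A) *\<^sub>v w = F *\<^sub>v w - A *\<^sub>v w"
    have c: "F *\<^sub>v x \<in> carrier_vec n" "A *\<^sub>v x \<in> carrier_vec n" "F *\<^sub>v w \<in> carrier_vec n" "A *\<^sub>v w \<in> carrier_vec n"
      using F A x w by auto
    show ?thesis unfolding a by (rule vec_alg[OF c])
  qed
  thus ?thesis using e1 unfolding w_def by simp
qed
lemma mat_vec_idx:
  fixes A :: "'a::comm_semiring_0 mat"
  assumes "A \<in> carrier_mat n n" "v \<in> carrier_vec n" "i < n"
  shows "(A *\<^sub>v v) $ i = (\<Sum>j<n. A $$ (i,j) * v $ j)"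
  using assms by (auto simp: scalar_prod_def lessThan_atLeast0 intro!: sum.cong)

lemma mat_mult_idx:
  fixes A :: "'a::comm_semiring_0 mat"
  assumes "A \<in> carrier_mat n n" "B \<in> carrier_mat n n" "i < n" "j < n"
  shows "(A * B) $$ (i,j) = (\<Sum>l<n. A $$ (i,l) * B $$ (l,j))"
  using assms by (auto simp: scalar_prod_def lessThan_atLeast0 intro!: sum.cong)

lemma pow_Suc_left:
  fixes A :: "'a::semiring_1 mat"
  assumes A: "A \<in> carrier_mat n n"
  shows "A ^\<^sub>m Suc k = A * A ^\<^sub>m k"
proof (induction k)
  case 0
  then show ?case using A by simp
next
  case (Suc k)
  have "A ^\<^sub>m Suc (Suc k) = (A * A ^\<^sub>m k) * A" using Suc by simp
  also have "\<dots> = A * (A ^\<^sub>m k * A)" using A by (intro assoc_mult_mat) auto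
  finally show ?case by simp
qed

lemma pow_smult:
  fixes A :: "'a::comm_ring_1 mat"
  assumes A: "A \<in> carrier_mat n n"
  shows "(a \<cdot>\<^sub>m A) ^\<^sub>m k = a ^ k \<cdot>\<^sub>m (A ^\<^sub>m k)"
proof (induction k)
  case 0
  then show ?case using A by (auto intro!: eq_matI)
next
  case (Suc k)
  have Ak: "A ^\<^sub>m k \<in> carrier_mat n n" using A by simp
  have "(a \<cdot>\<^sub>m A) ^\<^sub>m Suc k = (a ^ k \<cdot>\<^sub>m (A ^\<^sub>m k)) * (a \<cdot>\<^sub>m A)" using Suc by simp
  also have "\<dots> = a ^ k \<cdot>\<^sub>m ((A ^\<^sub>m k) * (a \<cdot>\<^sub>m A))"
    using Ak A by (intro mult_smult_assoc_mat) auto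
  also have "(A ^\<^sub>m k) * (a \<cdot>\<^sub>m A) = a \<cdot>\<^sub>m ((A ^\<^sub>m k) * A)"
    using Ak A by (intro mult_smult_distrib) auto
  finally show ?case using A by (auto intro!: eq_matI)
qed

lemma pow_nonneg:
  fixes C :: "real mat"
  assumes C: "C \<in> carrier_mat n n" and nn: "\<And>i j. i < n \<Longrightarrow> j < n \<Longrightarrow> C $$ (i,j) \<ge> 0"
  shows "i < n \<Longrightarrow> j < n \<Longrightarrow> (C ^\<^sub>m k) $$ (i,j) \<ge> 0"
proof (induction k arbitrary: i j)
  case 0
  then show ?case using C by simp
next
  case (Suc k)
  have "(C ^\<^sub>m Suc k) $$ (i,j) = (\<Sum>l<n. (C ^\<^sub>m k) $$ (i,l) * C $$ (l,j))"
    using mat_mult_idx[OF pow_carrier_mat[OF C] C Suc.prems] by simp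
  also have "\<dots> \<ge> 0" using Suc nn by (intro sum_nonneg mult_nonneg_nonneg) auto
  finally show ?case .
qed

lemma half_lem: "(q::real) < 1 \<Longrightarrow> q < (q + 1) / 2" by (simp add: field_simps)

lemma Mvec:
  fixes K :: "real mat"
  assumes K: "K \<in> carrier_mat n n" and n: "n > 0" and MM: "M_matrix K"
  shows "\<exists>u. (\<forall>i<n. u i > 0) \<and> (\<forall>i<n. (\<Sum>j<n. K $$ (i,j) * u j) > 0)"
proof -
  from MM K obtain \<alpha> where nn: "nonneg_mat (\<alpha> \<cdot>\<^sub>m 1\<^sub>m n - K)"
    and lt: "\<alpha> > rho_real (\<alpha> \<cdot>\<^sub>m 1\<^sub>m n - K)" unfolding M_matrix_def by auto
  define B where "B = \<alpha> \<cdot>\<^sub>m 1\<^sub>m n - K"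
  have Bc: "B \<in> carrier_mat n n" using K unfolding B_def by (simp add: minus_carrier_mat)
  have Bij: "B $$ (i,j) = (if i = j then \<alpha> else 0) - K $$ (i,j)" if "i < n" "j < n" for i j
    using that K unfolding B_def by simp
  have Bnn: "B $$ (i,j) \<ge> 0" if "i < n" "j < n" for i j
    using nn that Bc unfolding nonneg_mat_def B_def[symmetric] by auto
  define Bx where "Bx = map_mat complex_of_real B"
  have Bxc: "Bx \<in> carrier_mat n n" using Bc unfolding Bx_def by simp
  define \<rho> where "\<rho> = spectral_radius Bx"
  have "\<rho> \<in> norm ` spectrum Bx" unfolding \<rho>_def by (rule spectral_radius_mem_max(1)[OF Bxc n])
  hence \<rho>0: "\<rho> \<ge> 0" by auto
  have \<rho>\<alpha>: "\<rho> < \<alpha>" using lt unfolding rho_real_def B_def[symmetric] Bx_def[symmetric] \<rho>_def .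
  hence \<alpha>0: "\<alpha> > 0" using \<rho>0 by simp
  define r where "r = (\<rho> / \<alpha> + 1) / 2"
  have \<rho>\<alpha>1: "\<rho> / \<alpha> < 1" using \<rho>\<alpha> \<alpha>0 by simp
  have "\<rho> / \<alpha> \<ge> 0" using \<rho>0 \<alpha>0 by simp
  hence r0: "r > 0" unfolding r_def by simp
  have r1: "r < 1" unfolding r_def using \<rho>\<alpha>1 by simp
  have \<rho>r: "\<rho> < \<alpha> * r"
  proof -
    have "\<rho> / \<alpha> < r" unfolding r_def using half_lem[OF \<rho>\<alpha>1] .
    thus ?thesis using \<alpha>0 by (simp add: divide_less_eq mult.commute)
  qed
  define C where "C = (1 / \<alpha>) \<cdot>\<^sub>m B"
  have Cc: "C \<in> carrier_mat n n" using Bc unfolding C_def by simp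
  have Cij: "C $$ (i,j) = B $$ (i,j) / \<alpha>" if "i < n" "j < n" for i j
    using that Bc unfolding C_def by simp
  have Cnn: "C $$ (i,j) \<ge> 0" if "i < n" "j < n" for i j
    using Cij[OF that] Bnn[OF that] \<alpha>0 by simp
  define D where "D = map_mat complex_of_real ((1 / r) \<cdot>\<^sub>m C)"
  have Dc: "D \<in> carrier_mat n n" using Cc unfolding D_def by simp
  have Dij: "D $$ (i,j) = complex_of_real (B $$ (i,j) / (\<alpha> * r))" if "i < n" "j < n" for i j
    using that Cc Cij[OF that] unfolding D_def by (simp add: field_simps)
  have sD: "spectral_radius D < 1"
  proof -
    have "spectral_radius D \<in> norm ` spectrum D" by (rule spectral_radius_mem_max(1)[OF Dc n])
    then obtain lam where lam: "lam \<in> spectrum D" and sr: "spectral_radius D = norm lam" by auto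
    from lam obtain v where ev: "eigenvector D v lam" unfolding spectrum_def eigenvalue_def by auto
    have v: "v \<in> carrier_vec n" and v0: "v \<noteq> 0\<^sub>v n" and Dv: "D *\<^sub>v v = lam \<cdot>\<^sub>v v"
      using ev Dc unfolding eigenvector_def by auto
    have "Bx *\<^sub>v v = (complex_of_real (\<alpha> * r) * lam) \<cdot>\<^sub>v v"
    proof (rule eq_vecI)
      fix i assume "i < dim_vec ((complex_of_real (\<alpha> * r) * lam) \<cdot>\<^sub>v v)"
      hence i: "i < n" using v by simp
      have "(Bx *\<^sub>v v) $ i = (\<Sum>j<n. complex_of_real (B $$ (i,j)) * v $ j)"
        using mat_vec_idx[OF Bxc v i] Bc i unfolding Bx_def by (auto intro!: sum.cong)
      also have "\<dots> = complex_of_real (\<alpha> * r) * (\<Sum>j<n. D $$ (i,j) * v $ j)"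
        unfolding sum_distrib_left
      proof (rule sum.cong[OF refl])
        fix j assume "j \<in> {..<n}"
        hence j: "j < n" by simp
        have eqB: "complex_of_real (B $$ (i,j)) = complex_of_real (\<alpha> * r) * complex_of_real (B $$ (i,j) / (\<alpha> * r))"
        proof -
          have e: "(\<alpha> * r) * (B $$ (i,j) / (\<alpha> * r)) = B $$ (i,j)" using \<alpha>0 r0 by simp
          show ?thesis by (simp only: of_real_mult[symmetric] e)
        qed
        thus "complex_of_real (B $$ (i,j)) * v $ j = complex_of_real (\<alpha> * r) * (D $$ (i,j) * v $ j)"
          by (simp only: Dij[OF i j] eqB mult.assoc)
      qed
      also have "(\<Sum>j<n. D $$ (i,j) * v $ j) = (D *\<^sub>v v) $ i" using mat_vec_idx[OF Dc v i] by simp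
      also have "\<dots> = lam * v $ i" using Dv i v by simp
      finally show "(Bx *\<^sub>v v) $ i = ((complex_of_real (\<alpha> * r) * lam) \<cdot>\<^sub>v v) $ i" using i v by simp
    next
      show "dim_vec (Bx *\<^sub>v v) = dim_vec ((complex_of_real (\<alpha> * r) * lam) \<cdot>\<^sub>v v)" using Bxc v by simp
    qed
    hence "eigenvector Bx v (complex_of_real (\<alpha> * r) * lam)"
      unfolding eigenvector_def using v v0 Bxc by simp
    hence "norm (complex_of_real (\<alpha> * r) * lam) \<in> norm ` spectrum Bx"
      unfolding spectrum_def eigenvalue_def by auto
    from spectral_radius_mem_max(2)[OF Bxc n this]
    have "\<alpha> * r * norm lam \<le> \<rho>" unfolding \<rho>_def norm_mult norm_of_real using \<alpha>0 r0 by (simp del: of_real_mult)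
    hence "\<alpha> * r * norm lam < \<alpha> * r * 1" using \<rho>r by simp
    hence "norm lam < 1" using \<alpha>0 r0 by (simp only: mult_less_cancel_left_pos mult_pos_pos)
    thus ?thesis using sr by simp
  qed
  obtain c0 where cb: "\<And>k. norm_bound (D ^\<^sub>m k) c0"
    using spectral_radius_jnf_norm_bound_less_1_upper_triangular[OF Dc sD] by auto
  have Cpow: "(C ^\<^sub>m k) $$ (i,j) \<le> c0 * r ^ k" if "i < n" "j < n" for i j k
  proof -
    have C1: "(1 / r) \<cdot>\<^sub>m C \<in> carrier_mat n n" using Cc by simp
    have "D ^\<^sub>m k = map_mat complex_of_real (((1 / r) \<cdot>\<^sub>m C) ^\<^sub>m k)"
      unfolding D_def by (rule of_real_hom.mat_hom_pow[OF C1, symmetric])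
    also have "((1 / r) \<cdot>\<^sub>m C) ^\<^sub>m k = (1 / r) ^ k \<cdot>\<^sub>m (C ^\<^sub>m k)" by (rule pow_smult[OF Cc])
    finally have Dk: "D ^\<^sub>m k = map_mat complex_of_real ((1 / r) ^ k \<cdot>\<^sub>m (C ^\<^sub>m k))" .
    have "norm ((D ^\<^sub>m k) $$ (i,j)) \<le> c0" using cb[of k] that Dc unfolding norm_bound_def by auto
    moreover have "(D ^\<^sub>m k) $$ (i,j) = complex_of_real (((1 / r) ^ k \<cdot>\<^sub>m (C ^\<^sub>m k)) $$ (i,j))"
      unfolding Dk using that Cc by (intro index_map_mat) auto
    moreover have "((1 / r) ^ k \<cdot>\<^sub>m (C ^\<^sub>m k)) $$ (i,j) = (1 / r) ^ k * (C ^\<^sub>m k) $$ (i,j)"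
      using that Cc by simp
    ultimately have "\<bar>(1 / r) ^ k * (C ^\<^sub>m k) $$ (i,j)\<bar> \<le> c0" by (simp only: norm_of_real)
    hence "(1 / r) ^ k * (C ^\<^sub>m k) $$ (i,j) \<le> c0" by simp
    hence "(C ^\<^sub>m k) $$ (i,j) \<le> c0 / (1/r) ^ k" using r0 by (simp add: le_divide_eq mult.commute)
    thus ?thesis using r0 by (simp add: power_one_over field_simps)
  qed
  obtain N where N: "r ^ N < 1 / (real n * (\<bar>c0\<bar> + 1))"
    using real_arch_pow_inv[of "1 / (real n * (\<bar>c0\<bar> + 1))" r] r1 n by auto
  define w where "w k i = (\<Sum>j<n. (C ^\<^sub>m k) $$ (i,j))" for k i
  have w0: "w 0 i = 1" if "i < n" for i
  proof -
    have "w 0 i = (\<Sum>j<n. if j = i then 1 else 0)" unfolding w_def using that Cc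
      by (intro sum.cong) auto
    thus ?thesis using that by simp
  qed
  have wS: "w (Suc k) i = (\<Sum>l<n. C $$ (i,l) * w k l)" if "i < n" for i k
  proof -
    have "w (Suc k) i = (\<Sum>j<n. \<Sum>l<n. C $$ (i,l) * (C ^\<^sub>m k) $$ (l,j))"
      unfolding w_def pow_Suc_left[OF Cc] using that mat_mult_idx[OF Cc pow_carrier_mat[OF Cc]] by (intro sum.cong) auto
    also have "\<dots> = (\<Sum>l<n. \<Sum>j<n. C $$ (i,l) * (C ^\<^sub>m k) $$ (l,j))" by (rule sum.swap)
    also have "\<dots> = (\<Sum>l<n. C $$ (i,l) * w k l)" unfolding w_def by (simp add: sum_distrib_left)
    finally show ?thesis .
  qed
  have wnn: "w k i \<ge> 0" if "i < n" for i k
    unfolding w_def using pow_nonneg[OF Cc Cnn] that by (intro sum_nonneg) auto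
  have wN: "w N i < 1" if "i < n" for i
  proof -
    have "w N i \<le> (\<Sum>j<n. c0 * r ^ N)" unfolding w_def using Cpow that by (intro sum_mono) auto
    also have "\<dots> = real n * c0 * r ^ N" by simp
    also have "\<dots> \<le> real n * (\<bar>c0\<bar> + 1) * r ^ N" using r0 n
      by (intro mult_right_mono mult_left_mono) auto
    also have "\<dots> < real n * (\<bar>c0\<bar> + 1) * (1 / (real n * (\<bar>c0\<bar> + 1)))"
      using N n by (intro mult_strict_left_mono) auto
    also have "\<dots> = 1" using n by simp
    finally show ?thesis .
  qed
  have N0: "N > 0"
  proof (rule ccontr)
    assume "\<not> N > 0"
    hence "N = 0" by simp
    thus False using wN[OF n] w0[OF n] by simp
  qed
  define u where "u i = (\<Sum>k<N. w k i)" for i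
  have upos: "u i > 0" if "i < n" for i
  proof -
    have "u i = w 0 i + (\<Sum>k\<in>{..<N}-{0}. w k i)" unfolding u_def using N0 by (simp add: sum.remove)
    also have "(\<Sum>k\<in>{..<N}-{0}. w k i) \<ge> 0" using wnn[OF that] by (intro sum_nonneg) auto
    ultimately show ?thesis using w0[OF that] by simp
  qed
  have Cu: "(\<Sum>l<n. C $$ (i,l) * u l) = (\<Sum>k<N. w (Suc k) i)" if "i < n" for i
  proof -
    have "(\<Sum>l<n. C $$ (i,l) * u l) = (\<Sum>l<n. \<Sum>k<N. C $$ (i,l) * w k l)"
      unfolding u_def by (simp add: sum_distrib_left)
    also have "\<dots> = (\<Sum>k<N. \<Sum>l<n. C $$ (i,l) * w k l)" by (rule sum.swap)
    also have "\<dots> = (\<Sum>k<N. w (Suc k) i)" using wS[OF that] by simp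
    finally show ?thesis .
  qed
  have tele: "u i - (\<Sum>k<N. w (Suc k) i) = w 0 i - w N i" for i
  proof -
    have "(\<Sum>k<Suc N. w k i) = u i + w N i" unfolding u_def by simp
    moreover have "(\<Sum>k<Suc N. w k i) = w 0 i + (\<Sum>k<N. w (Suc k) i)" by (rule sum.lessThan_Suc_shift)
    ultimately show ?thesis by simp
  qed
  show ?thesis
  proof (intro exI[of _ u] conjI allI impI)
    fix i assume i: "i < n"
    show "u i > 0" by (rule upos[OF i])
    have "(\<Sum>j<n. K $$ (i,j) * u j) = (\<Sum>j<n. (if i = j then \<alpha> else 0) * u j - \<alpha> * (C $$ (i,j) * u j))"
    proof (rule sum.cong[OF refl])
      fix j assume "j \<in> {..<n}"
      hence j: "j < n" by simp
      show "K $$ (i,j) * u j = (if i = j then \<alpha> else 0) * u j - \<alpha> * (C $$ (i,j) * u j)"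
      proof -
        have e1: "B $$ (i,j) = \<alpha> * C $$ (i,j)" using Cij[OF i j] \<alpha>0 by simp
        have "K $$ (i,j) = (if i = j then \<alpha> else 0) - \<alpha> * C $$ (i,j)" using Bij[OF i j] e1 by simp
        thus ?thesis by (simp only: left_diff_distrib mult.assoc)
      qed
    qed
    also have "\<dots> = \<alpha> * u i - \<alpha> * (\<Sum>j<n. C $$ (i,j) * u j)"
    proof -
      have "(\<Sum>j<n. (if i = j then \<alpha> else 0) * u j) = (\<Sum>j<n. if i = j then \<alpha> * u j else 0)"
        by (intro sum.cong) auto
      also have "\<dots> = \<alpha> * u i" using i by simp
      finally show ?thesis by (simp add: sum_subtractf sum_distrib_left)
    qed
    also have "\<dots> = \<alpha> * (w 0 i - w N i)" using Cu[OF i] tele[of i] by (simp add: right_diff_distrib[symmetric])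
    also have "\<dots> > 0" using \<alpha>0 wN[OF i] w0[OF i] by simp
    finally show "(\<Sum>j<n. K $$ (i,j) * u j) > 0" .
  qed
qed

lemma contract:
  fixes M A :: "complex mat" and u :: "nat \<Rightarrow> real"
  assumes M: "M \<in> carrier_mat n n" and A: "A \<in> carrier_mat n n" and n: "n > 0"
    and cond: "comparison_mat M - cabs_mat (M - A) = comparison_mat A"
    and upos: "\<And>i. i < n \<Longrightarrow> u i > 0"
    and Apos: "\<And>i. i < n \<Longrightarrow> (\<Sum>j<n. comparison_mat A $$ (i,j) * u j) > 0"
  shows "\<exists>c. 0 \<le> c \<and> c < 1 \<and> (\<forall>x y s. x \<in> carrier_vec n \<longrightarrow> y \<in> carrier_vec n \<longrightarrow>
            M *\<^sub>v y = (M - A) *\<^sub>v x \<longrightarrow> (\<forall>j<n. cmod (x $ j) \<le> s * u j) \<longrightarrow>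
            (\<forall>j<n. cmod (y $ j) \<le> c * s * u j))"
proof -
  have ent: "comparison_mat M $$ (i,j) - cmod (M $$ (i,j) - A $$ (i,j)) = comparison_mat A $$ (i,j)"
    if "i < n" "j < n" for i j
  proof -
    have "(comparison_mat M - cabs_mat (M - A)) $$ (i,j) = comparison_mat A $$ (i,j)" using cond by simp
    thus ?thesis using that M A
      by (simp add: comparison_mat_def cabs_mat_def)
  qed
  have cM: "comparison_mat M $$ (i,j) = (if i = j then cmod (M $$ (i,j)) else - cmod (M $$ (i,j)))"
    if "i < n" "j < n" for i j using that M by (simp add: comparison_mat_def)
  define G where "G i = (\<Sum>j<n. comparison_mat M $$ (i,j) * u j)" for i
  define R where "R i = (\<Sum>j<n. cmod (M $$ (i,j) - A $$ (i,j)) * u j)" for i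
  define H where "H i = (\<Sum>j<n. comparison_mat A $$ (i,j) * u j)" for i
  have GRH: "G i = R i + H i" if "i < n" for i
  proof -
    have "G i = (\<Sum>j<n. cmod (M $$ (i,j) - A $$ (i,j)) * u j + comparison_mat A $$ (i,j) * u j)"
      unfolding G_def
    proof (rule sum.cong[OF refl])
      fix j assume "j \<in> {..<n}"
      thus "comparison_mat M $$ (i,j) * u j = cmod (M $$ (i,j) - A $$ (i,j)) * u j + comparison_mat A $$ (i,j) * u j"
        using ent[OF that, of j] by (simp add: algebra_simps)
    qed
    thus ?thesis unfolding R_def H_def by (simp add: sum.distrib)
  qed
  have R0: "R i \<ge> 0" for i unfolding R_def
    using upos by (intro sum_nonneg) (simp add: less_imp_le)
  have Gpos: "G i > 0" if "i < n" for i using GRH[OF that] R0[of i] Apos[OF that] unfolding H_def by simp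
  define c where "c = Max ((\<lambda>i. R i / G i) ` {..<n})"
  have fin: "finite ((\<lambda>i. R i / G i) ` {..<n})" by simp
  have ne: "(\<lambda>i. R i / G i) ` {..<n} \<noteq> {}" using n by auto
  have c_ge: "R i / G i \<le> c" if "i < n" for i unfolding c_def using fin that by (intro Max_ge) auto
  have "c \<in> (\<lambda>i. R i / G i) ` {..<n}" unfolding c_def using fin ne by (rule Max_in)
  then obtain i0 where i0: "i0 < n" "c = R i0 / G i0" by auto
  have c0: "0 \<le> c" using i0 R0[of i0] Gpos[OF i0(1)] by simp
  have c1: "c < 1" using i0 GRH[OF i0(1)] Gpos[OF i0(1)] Apos[OF i0(1)] unfolding H_def
    by (simp add: divide_less_eq)
  show ?thesis
  proof (intro exI[of _ c] conjI c0 c1 allI impI)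
    fix x y and s :: real
    assume x: "x \<in> carrier_vec n" and y: "y \<in> carrier_vec n" and eq: "M *\<^sub>v y = (M - A) *\<^sub>v x"
      and xb: "\<forall>j<n. cmod (x $ j) \<le> s * u j"
    have s0: "0 \<le> s"
    proof -
      have "0 \<le> s * u 0" using xb n norm_ge_zero order_trans by blast
      thus ?thesis using upos[OF n] by (simp add: zero_le_mult_iff)
    qed
    define f where "f j = cmod (y $ j) / u j" for j
    have "finite (f ` {..<n})" by simp
    then have "Max (f ` {..<n}) \<in> f ` {..<n}" using n by (intro Max_in) auto
    then obtain i where i: "i < n" "f i = Max (f ` {..<n})" by auto
    have fmax: "f j \<le> f i" if "j < n" for j using i that by simp
    define t where "t = f i"
    have yb: "cmod (y $ j) \<le> t * u j" if "j < n" for j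
      using fmax[OF that] upos[OF that] unfolding t_def f_def by (simp add: divide_le_eq)
    have yi: "cmod (y $ i) = t * u i" unfolding t_def f_def using upos[OF i(1)] by simp
    have t0: "0 \<le> t" unfolding t_def f_def using upos[OF i(1)] by simp
    have row: "(\<Sum>j<n. M $$ (i,j) * y $ j) = (\<Sum>j<n. (M $$ (i,j) - A $$ (i,j)) * x $ j)"
    proof -
      have MA: "M - A \<in> carrier_mat n n" using M A by (simp add: minus_carrier_mat)
      have "(M *\<^sub>v y) $ i = ((M - A) *\<^sub>v x) $ i" using eq by simp
      hence "(\<Sum>j<n. M $$ (i,j) * y $ j) = (\<Sum>j<n. (M - A) $$ (i,j) * x $ j)"
        using mat_vec_idx[OF M y i(1)] mat_vec_idx[OF MA x i(1)] by simp
      also have "\<dots> = (\<Sum>j<n. (M $$ (i,j) - A $$ (i,j)) * x $ j)"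
        using M A i(1) by (intro sum.cong) auto
      finally show ?thesis .
    qed
    have split: "(\<Sum>j<n. M $$ (i,j) * y $ j) = M $$ (i,i) * y $ i + (\<Sum>j\<in>{..<n}-{i}. M $$ (i,j) * y $ j)"
      using i(1) by (simp add: sum.remove)
    have Gi: "G i = cmod (M $$ (i,i)) * u i - (\<Sum>j\<in>{..<n}-{i}. cmod (M $$ (i,j)) * u j)"
    proof -
      have "G i = comparison_mat M $$ (i,i) * u i + (\<Sum>j\<in>{..<n}-{i}. comparison_mat M $$ (i,j) * u j)"
        unfolding G_def using i(1) by (simp add: sum.remove)
      also have "(\<Sum>j\<in>{..<n}-{i}. comparison_mat M $$ (i,j) * u j) = (\<Sum>j\<in>{..<n}-{i}. - (cmod (M $$ (i,j)) * u j))"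
        using cM i(1) by (intro sum.cong) auto
      finally show ?thesis using cM[OF i(1) i(1)] by (simp add: sum_negf)
    qed
    have b1: "cmod (\<Sum>j<n. (M $$ (i,j) - A $$ (i,j)) * x $ j) \<le> s * R i"
    proof -
      have "cmod (\<Sum>j<n. (M $$ (i,j) - A $$ (i,j)) * x $ j) \<le> (\<Sum>j<n. cmod ((M $$ (i,j) - A $$ (i,j)) * x $ j))"
        by (rule norm_sum)
      also have "\<dots> \<le> (\<Sum>j<n. cmod (M $$ (i,j) - A $$ (i,j)) * (s * u j))"
        using xb by (intro sum_mono) (auto simp: norm_mult intro: mult_left_mono)
      also have "\<dots> = s * R i" unfolding R_def by (simp add: sum_distrib_left algebra_simps)
      finally show ?thesis .
    qed
    have b2: "cmod (\<Sum>j\<in>{..<n}-{i}. M $$ (i,j) * y $ j) \<le> t * (\<Sum>j\<in>{..<n}-{i}. cmod (M $$ (i,j)) * u j)"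
    proof -
      have "cmod (\<Sum>j\<in>{..<n}-{i}. M $$ (i,j) * y $ j) \<le> (\<Sum>j\<in>{..<n}-{i}. cmod (M $$ (i,j) * y $ j))"
        by (rule norm_sum)
      also have "\<dots> \<le> (\<Sum>j\<in>{..<n}-{i}. cmod (M $$ (i,j)) * (t * u j))"
        using yb by (intro sum_mono) (auto simp: norm_mult intro: mult_left_mono)
      also have "\<dots> = t * (\<Sum>j\<in>{..<n}-{i}. cmod (M $$ (i,j)) * u j)"
        by (simp add: sum_distrib_left algebra_simps)
      finally show ?thesis .
    qed
    have "M $$ (i,i) * y $ i = (\<Sum>j<n. (M $$ (i,j) - A $$ (i,j)) * x $ j) - (\<Sum>j\<in>{..<n}-{i}. M $$ (i,j) * y $ j)"
      using row split by (simp add: eq_diff_eq)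
    hence "cmod (M $$ (i,i) * y $ i) = cmod ((\<Sum>j<n. (M $$ (i,j) - A $$ (i,j)) * x $ j) - (\<Sum>j\<in>{..<n}-{i}. M $$ (i,j) * y $ j))"
      by (rule arg_cong)
    hence "cmod (M $$ (i,i)) * cmod (y $ i) \<le> s * R i + t * (\<Sum>j\<in>{..<n}-{i}. cmod (M $$ (i,j)) * u j)"
      using b1 b2 norm_triangle_ineq4[of "\<Sum>j<n. (M $$ (i,j) - A $$ (i,j)) * x $ j" "\<Sum>j\<in>{..<n}-{i}. M $$ (i,j) * y $ j"]
      unfolding norm_mult by linarith
    hence "t * G i \<le> s * R i" unfolding Gi yi by (simp add: algebra_simps)
    hence "t \<le> s * (R i / G i)" using Gpos[OF i(1)] by (simp add: le_divide_eq mult.commute)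
    also have "\<dots> \<le> s * c" using c_ge[OF i(1)] s0 by (rule mult_left_mono)
    finally have tc: "t \<le> c * s" by (simp add: mult.commute)
    fix j assume j: "j < n"
    show "cmod (y $ j) \<le> c * s * u j"
    proof -
      have "cmod (y $ j) \<le> t * u j" by (rule yb[OF j])
      also have "\<dots> \<le> c * s * u j" using tc upos[OF j] by (intro mult_right_mono) auto
      finally show "cmod (y $ j) \<le> c * s * u j" .
    qed
  qed
qed
lemma sign_lem: "z * (if z = 0 then 1 else cnj z / complex_of_real (cmod z)) = complex_of_real (cmod z)"
proof (cases "z = 0")
  case False
  have "z * cnj z = complex_of_real (cmod z) * complex_of_real (cmod z)"
    by (simp add: complex_norm_square[symmetric] power2_eq_square)
  thus ?thesis using False by (simp add: field_simps)
qed simp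

lemma sign_norm: "cmod (if z = 0 then 1 else cnj z / complex_of_real (cmod z)) = 1"
  by (cases "z = 0") (auto simp: norm_divide)

theorem corollary1:
  fixes A M F :: "complex mat" and n :: nat
  assumes "n > 0"
    and "A \<in> carrier_mat n n" and "M \<in> carrier_mat n n" and "F \<in> carrier_mat n n"
    and "invertible_mat M" and "invertible_mat F"
    and "H_matrix A"
    and "comparison_mat M - cabs_mat (M - A) = comparison_mat A"
    and "comparison_mat F - cabs_mat (F - A) = comparison_mat A"
  shows "rho_real (cabs_mat (1\<^sub>m n - the (mat_inverse F) * (M + F - A) * the (mat_inverse M) * A)) < 1"
proof -
  note n = assms(1) and A = assms(2) and M = assms(3) and F = assms(4)
  have Kc: "comparison_mat A \<in> carrier_mat n n" using A unfolding comparison_mat_def by simp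
  obtain u where upos: "\<And>i. i < n \<Longrightarrow> u i > 0"
    and Apos: "\<And>i. i < n \<Longrightarrow> (\<Sum>j<n. comparison_mat A $$ (i,j) * u j) > 0"
    using Mvec[OF Kc n assms(7)[unfolded H_matrix_def]] by blast
  obtain cM where cM: "0 \<le> cM" "cM < 1" and cMb: "\<And>x y s. x \<in> carrier_vec n \<Longrightarrow> y \<in> carrier_vec n \<Longrightarrow>
            M *\<^sub>v y = (M - A) *\<^sub>v x \<Longrightarrow> (\<forall>j<n. cmod (x $ j) \<le> s * u j) \<Longrightarrow>
            (\<forall>j<n. cmod (y $ j) \<le> cM * s * u j)"
    using contract[OF M A n assms(8) upos Apos] by blast
  obtain cF where cF: "0 \<le> cF" "cF < 1" and cFb: "\<And>x y s. x \<in> carrier_vec n \<Longrightarrow> y \<in> carrier_vec n \<Longrightarrow>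
            F *\<^sub>v y = (F - A) *\<^sub>v x \<Longrightarrow> (\<forall>j<n. cmod (x $ j) \<le> s * u j) \<Longrightarrow>
            (\<forall>j<n. cmod (y $ j) \<le> cF * s * u j)"
    using contract[OF F A n assms(9) upos Apos] by blast
  define X where "X = the (mat_inverse M)"
  define Y where "Y = the (mat_inverse F)"
  have X: "X \<in> carrier_mat n n" "M * X = 1\<^sub>m n" using inv_some[OF M assms(5)] unfolding X_def by auto
  have Y: "Y \<in> carrier_mat n n" "F * Y = 1\<^sub>m n" using inv_some[OF F assms(6)] unfolding Y_def by auto
  define P where "P = 1\<^sub>m n - Y * (M + F - A) * X * A"
  have Sc: "M + F - A \<in> carrier_mat n n" by (rule minus_carrier_mat[OF A])
  have Pc: "P \<in> carrier_mat n n" unfolding P_def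
    by (rule minus_carrier_mat[OF mult_carrier_mat[OF mult_carrier_mat[OF mult_carrier_mat[OF Y(1) Sc] X(1)] A]])
  define c where "c = cF * cM"
  have c0: "0 \<le> c" unfolding c_def using cF cM by simp
  have "cF * cM \<le> cF * 1" using cF cM by (intro mult_left_mono) auto
  hence c1: "c < 1" unfolding c_def using cF by linarith
  have Pb: "\<forall>j<n. cmod ((P *\<^sub>v x) $ j) \<le> c * s * u j"
    if x: "x \<in> carrier_vec n" and xb: "\<forall>j<n. cmod (x $ j) \<le> s * u j" for x s
  proof -
    define y where "y = x - X *\<^sub>v (A *\<^sub>v x)"
    have y: "y \<in> carrier_vec n" unfolding y_def using x X A by simp
    have My: "M *\<^sub>v y = (M - A) *\<^sub>v x" unfolding y_def by (rule step_vec[OF M A X(1) X(2) x])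
    have yb: "\<forall>j<n. cmod (y $ j) \<le> (cM * s) * u j" using cMb[OF x y My xb] by simp
    have Fz: "F *\<^sub>v (P *\<^sub>v x) = (F - A) *\<^sub>v y" unfolding P_def y_def
      by (rule step_vec2[OF M A X(1) F Y(1) X(2) Y(2) x])
    have z: "P *\<^sub>v x \<in> carrier_vec n" using Pc x by simp
    have "\<forall>j<n. cmod ((P *\<^sub>v x) $ j) \<le> cF * (cM * s) * u j" by (rule cFb[OF y z Fz yb])
    thus ?thesis unfolding c_def by (simp add: mult.assoc)
  qed
  have rowb: "(\<Sum>j<n. cmod (P $$ (i,j)) * u j) \<le> c * u i" if i: "i < n" for i
  proof -
    define sg where "sg j = (if P $$ (i,j) = 0 then 1 else cnj (P $$ (i,j)) / complex_of_real (cmod (P $$ (i,j))))" for j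
    define x where "x = vec n (\<lambda>j. complex_of_real (u j) * sg j)"
    have x: "x \<in> carrier_vec n" unfolding x_def by simp
    have xb: "\<forall>j<n. cmod (x $ j) \<le> 1 * u j"
    proof (intro allI impI)
      fix j assume j: "j < n"
      have "cmod (x $ j) = \<bar>u j\<bar> * cmod (sg j)" unfolding x_def using j by (simp add: norm_mult)
      also have "\<dots> = u j" unfolding sg_def sign_norm using upos[OF j] by simp
      finally show "cmod (x $ j) \<le> 1 * u j" by simp
    qed
    have "(P *\<^sub>v x) $ i = (\<Sum>j<n. P $$ (i,j) * x $ j)" by (rule mat_vec_idx[OF Pc x i])
    also have "\<dots> = (\<Sum>j<n. complex_of_real (cmod (P $$ (i,j)) * u j))"
    proof (rule sum.cong[OF refl])
      fix j assume "j \<in> {..<n}"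
      hence "x $ j = complex_of_real (u j) * sg j" unfolding x_def by simp
      hence "P $$ (i,j) * x $ j = complex_of_real (u j) * (P $$ (i,j) * sg j)" by (simp add: algebra_simps)
      also have "P $$ (i,j) * sg j = complex_of_real (cmod (P $$ (i,j)))" unfolding sg_def by (rule sign_lem)
      finally show "P $$ (i,j) * x $ j = complex_of_real (cmod (P $$ (i,j)) * u j)" by (simp add: mult.commute)
    qed
    also have "\<dots> = complex_of_real (\<Sum>j<n. cmod (P $$ (i,j)) * u j)" by (simp only: of_real_sum)
    finally have eqPx: "(P *\<^sub>v x) $ i = complex_of_real (\<Sum>j<n. cmod (P $$ (i,j)) * u j)" .
    have "cmod ((P *\<^sub>v x) $ i) = \<bar>\<Sum>j<n. cmod (P $$ (i,j)) * u j\<bar>" unfolding eqPx by (rule norm_of_real)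
    moreover have "(\<Sum>j<n. cmod (P $$ (i,j)) * u j) \<ge> 0"
      using upos by (intro sum_nonneg mult_nonneg_nonneg) (auto simp: less_imp_le)
    moreover have "cmod ((P *\<^sub>v x) $ i) \<le> c * 1 * u i" using Pb[OF x xb] i by blast
    ultimately show ?thesis by simp
  qed
  define Q where "Q = map_mat complex_of_real (cabs_mat P)"
  have Qc: "Q \<in> carrier_mat n n" using Pc unfolding Q_def cabs_mat_def by simp
  have Qij: "Q $$ (i,j) = complex_of_real (cmod (P $$ (i,j)))" if "i < n" "j < n" for i j
    using that Pc unfolding Q_def cabs_mat_def by simp
  have "spectral_radius Q \<in> norm ` spectrum Q" by (rule spectral_radius_mem_max(1)[OF Qc n])
  then obtain lam where lam: "lam \<in> spectrum Q" and sr: "spectral_radius Q = norm lam" by auto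
  from lam obtain v where ev: "eigenvector Q v lam" unfolding spectrum_def eigenvalue_def by auto
  have v: "v \<in> carrier_vec n" and v0: "v \<noteq> 0\<^sub>v n" and Qv: "Q *\<^sub>v v = lam \<cdot>\<^sub>v v"
    using ev Qc unfolding eigenvector_def by auto
  define f where "f j = cmod (v $ j) / u j" for j
  have "finite (f ` {..<n})" by simp
  then have "Max (f ` {..<n}) \<in> f ` {..<n}" using n by (intro Max_in) auto
  then obtain i where i: "i < n" "f i = Max (f ` {..<n})" by auto
  have fmax: "f j \<le> f i" if "j < n" for j using i that by simp
  define t where "t = f i"
  have vb: "cmod (v $ j) \<le> t * u j" if "j < n" for j
    using fmax[OF that] upos[OF that] unfolding t_def f_def by (simp add: divide_le_eq)
  have vi: "cmod (v $ i) = t * u i" unfolding t_def f_def using upos[OF i(1)] by simp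
  have tpos: "t > 0"
  proof -
    obtain j where j: "j < n" "v $ j \<noteq> 0" using v0 v by (metis eq_vecI carrier_vecD index_zero_vec)
    have "0 < cmod (v $ j)" using j by simp
    also have "\<dots> \<le> t * u j" by (rule vb[OF j(1)])
    finally show ?thesis using upos[OF j(1)] by (simp add: zero_less_mult_iff)
  qed
  have "lam * v $ i = (Q *\<^sub>v v) $ i" using Qv i v by simp
  also have "\<dots> = (\<Sum>j<n. Q $$ (i,j) * v $ j)" by (rule mat_vec_idx[OF Qc v i(1)])
  finally have "cmod lam * cmod (v $ i) = cmod (\<Sum>j<n. Q $$ (i,j) * v $ j)" by (metis norm_mult)
  also have "\<dots> \<le> (\<Sum>j<n. cmod (Q $$ (i,j) * v $ j))" by (rule norm_sum)
  also have "\<dots> \<le> (\<Sum>j<n. cmod (P $$ (i,j)) * (t * u j))"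
    using vb Qij i by (intro sum_mono) (auto simp: norm_mult intro: mult_left_mono)
  also have "\<dots> = t * (\<Sum>j<n. cmod (P $$ (i,j)) * u j)" by (simp add: sum_distrib_left algebra_simps)
  also have "\<dots> \<le> t * (c * u i)" using rowb[OF i(1)] tpos by (intro mult_left_mono) auto
  finally have "cmod lam * (t * u i) \<le> c * (t * u i)" unfolding vi by (simp add: algebra_simps)
  hence "cmod lam \<le> c" using tpos upos[OF i(1)] by (simp add: mult_le_cancel_right_pos)
  hence "spectral_radius Q < 1" using sr c1 by simp
  thus ?thesis unfolding rho_real_def Q_def P_def X_def Y_def .
qed
end
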